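(* Let $G$ be a group with the unique root property. Let $\varphi_1:H_1\to H_1'$ and $\varphi_2:H_2\to H_2'$ be isomorphisms between subgroups of finite index in $G$. Suppose that $H_2$ is a normal subgroup of $G$ and that $\varphi_1|_{H_1\cap H_2}=\varphi_2|_{H_1\cap H_2}$. Then there exists an isomorphism $\varphi:H_1H_2\to H_1'H_2'$ with $\varphi|_{H_1}=\varphi_1$ and $\varphi|_{H_2}=\varphi_2$.
   Context: A group $G$ has the unique root property if for all $x,y\in G$ and every positive integer $n$, $x^n=y^n$ implies $x=y$. *)

theory Defs
  imports "HOL-Algebra.Algebra"
begin

definition unique_root_property :: "('a, 'b) monoid_scheme \<Rightarrow> bool" where
  "unique_root_property G \<longleftrightarrow>
     (\<forall>x \<in> carrier G. \<forall>y \<in> carrier G. \<forall>n::nat. n > 0 \<longrightarrow>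
        x [^]\<^bsub>G\<^esub> n = y [^]\<^bsub>G\<^esub> n \<longrightarrow> x = y)"

definition finite_index_subgroup :: "'a set \<Rightarrow> ('a, 'b) monoid_scheme \<Rightarrow> bool" where
  "finite_index_subgroup H G \<longleftrightarrow> subgroup H G \<and> finite (rcosets\<^bsub>G\<^esub> H)"

end

theory Submission imports Defs begin

lemma (in group) fi_pow:
  assumes "subgroup H G" "finite (rcosets H)" "x \<in> carrier G"
  shows "\<exists>m>0. x [^] (m::nat) \<in> H"
proof -
  define f where "f = (\<lambda>i::nat. H #> x [^] i)"
  have "f ` UNIV \<subseteq> rcosets H"
  proof
    fix y assume "y \<in> f ` UNIV"
    then obtain i where "y = f i" by blast
    thus "y \<in> rcosets H" unfolding f_def using rcosetsI[OF subgroup.subset[OF assms(1)], of "x [^] i"] assms(3) by simp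
  qed
  hence fin: "finite (f ` UNIV)" using assms(2) by (rule finite_subset)
  have "\<not> inj f"
  proof
    assume "inj f"
    hence "finite (UNIV :: nat set)" using finite_imageD[OF fin] by simp
    thus False by simp
  qed
  then obtain i j where ij: "i \<noteq> j" "f i = f j" unfolding inj_def by auto
  have "\<exists>i j. i < j \<and> f i = f j"
  proof (cases "i < j")
    case True thus ?thesis using ij by blast
  next
    case False hence "j < i" using ij(1) by simp
    thus ?thesis using ij(2)[symmetric] by blast
  qed
  then obtain i j :: nat where ij: "i < j" "H #> x [^] i = H #> x [^] j" unfolding f_def by blast
  have xj: "x [^] j \<in> carrier G" using assms(3) by (rule nat_pow_closed)
  have xi: "x [^] i \<in> carrier G" using assms(3) by (rule nat_pow_closed)
  have "x [^] j \<in> H #> x [^] j" using rcos_self[OF xj assms(1)] .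
  hence "x [^] j \<in> H #> x [^] i" using ij(2) by simp
  then obtain h where h: "h \<in> H" "x [^] j = h \<otimes> x [^] i" unfolding r_coset_def by blast
  have hc: "h \<in> carrier G" using h(1) subgroup.mem_carrier[OF assms(1)] by blast
  have "x [^] (j - i) \<otimes> x [^] i = x [^] (j - i + i)" using nat_pow_mult[OF assms(3)] .
  also have "j - i + i = j" using ij(1) by simp
  finally have "x [^] (j - i) \<otimes> x [^] i = h \<otimes> x [^] i" using h(2) by simp
  hence "x [^] (j - i) = h" using right_cancel[OF xi _ hc, of "x [^] (j - i)"] assms(3) by simp
  moreover have "j - i > 0" using ij(1) by simp
  ultimately show ?thesis using h(1) by blast
qed

lemma (in group) sub_pow_closed:
  assumes "subgroup H G" "x \<in> H" shows "x [^] (n::nat) \<in> H"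
proof (induction n)
  case 0 show ?case using subgroup.one_closed[OF assms(1)] by simp
next
  case (Suc n) show ?case using subgroup.m_closed[OF assms(1) Suc assms(2)] by simp
qed

lemma (in group) kinvk:
  assumes "k \<in> carrier G" "z \<in> carrier G" shows "k \<otimes> (inv k \<otimes> z) = z"
proof -
  have "k \<otimes> (inv k \<otimes> z) = (k \<otimes> inv k) \<otimes> z" using assms by (simp only: m_assoc inv_closed)
  thus ?thesis using assms by simp
qed

lemma (in group) conj_pow:
  assumes k: "k \<in> carrier G" and h: "h \<in> carrier G"
  shows "(inv k \<otimes> h \<otimes> k) [^] (m::nat) = inv k \<otimes> h [^] m \<otimes> k"
proof (induction m)
  case 0 show ?case using k by simp
next
  case (Suc m)
  have hm: "h [^] m \<in> carrier G" using h by (rule nat_pow_closed)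
  have "(inv k \<otimes> h \<otimes> k) [^] Suc m = inv k \<otimes> h [^] m \<otimes> k \<otimes> (inv k \<otimes> h \<otimes> k)"
    using Suc by simp
  also have "\<dots> = inv k \<otimes> (h [^] m \<otimes> h) \<otimes> k"
    using k h hm by (simp add: m_assoc kinvk)
  finally show ?case by simp
qed

lemma (in group) subhom_one:
  assumes "\<forall>x\<in>H. f x \<in> carrier G" "\<forall>x\<in>H. \<forall>y\<in>H. f (x \<otimes> y) = f x \<otimes> f y" "subgroup H G"
  shows "f \<one> = \<one>"
proof -
  have o: "\<one> \<in> H" using subgroup.one_closed[OF assms(3)] .
  have fo: "f \<one> \<in> carrier G" using assms(1) o by blast
  have "f (\<one> \<otimes> \<one>) = f \<one> \<otimes> f \<one>" using assms(2) o by blast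
  hence "f \<one> = f \<one> \<otimes> f \<one>" by simp
  thus ?thesis using l_cancel_one'[OF fo fo] by simp
qed

lemma (in group) subhom_inv:
  assumes "\<forall>x\<in>H. f x \<in> carrier G" "\<forall>x\<in>H. \<forall>y\<in>H. f (x \<otimes> y) = f x \<otimes> f y" "subgroup H G" "x \<in> H"
  shows "f (inv x) = inv (f x)"
proof -
  have ix: "inv x \<in> H" using subgroup.m_inv_closed[OF assms(3,4)] .
  have xc: "x \<in> carrier G" using subgroup.mem_carrier[OF assms(3,4)] .
  have "f (inv x \<otimes> x) = f (inv x) \<otimes> f x" using assms(2) ix assms(4) by blast
  also have "inv x \<otimes> x = \<one>" using xc by simp
  finally have "f (inv x) \<otimes> f x = \<one>" using subhom_one[OF assms(1-3)] by simp
  moreover have "f (inv x) \<in> carrier G" "f x \<in> carrier G" using assms(1) ix assms(4) by blast+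
  ultimately show ?thesis using inv_equality[of "f (inv x)" "f x"] by simp
qed

lemma (in group) subhom_pow:
  assumes "\<forall>x\<in>H. f x \<in> carrier G" "\<forall>x\<in>H. \<forall>y\<in>H. f (x \<otimes> y) = f x \<otimes> f y" "subgroup H G" "x \<in> H"
  shows "f (x [^] (n::nat)) = f x [^] n"
proof (induction n)
  case 0 show ?case using subhom_one[OF assms(1-3)] by simp
next
  case (Suc n)
  have "x [^] n \<in> H" using sub_pow_closed[OF assms(3,4)] .
  hence "f (x [^] n \<otimes> x) = f (x [^] n) \<otimes> f x" using assms(2,4) by blast
  thus ?case using Suc by simp
qed


lemma (in group) alg4:
  assumes "a \<in> carrier G" "b \<in> carrier G" "c \<in> carrier G" "d \<in> carrier G"
  shows "(a \<otimes> b = c \<otimes> d) \<longleftrightarrow> (inv c \<otimes> a = d \<otimes> inv b)"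
proof -
  have "(inv c \<otimes> a = d \<otimes> inv b) \<longleftrightarrow> a = c \<otimes> (d \<otimes> inv b)"
    by (rule inv_solve_left') (use assms in auto)
  also have "c \<otimes> (d \<otimes> inv b) = c \<otimes> d \<otimes> inv b" using assms by (simp add: m_assoc)
  also have "(a = c \<otimes> d \<otimes> inv b) \<longleftrightarrow> c \<otimes> d = a \<otimes> b"
    by (rule inv_solve_right) (use assms in auto)
  finally show ?thesis by auto
qed

lemma (in group) main:
  fixes H1 H1' H2 H2' :: "'a set"
    and \<phi>1 \<phi>2 :: "'a \<Rightarrow> 'a"
  assumes "group G"
    and "unique_root_property G"
    and "finite_index_subgroup H1 G" and "finite_index_subgroup H1' G"
    and "finite_index_subgroup H2 G" and "finite_index_subgroup H2' G"
    and "\<phi>1 \<in> iso (G\<lparr>carrier := H1\<rparr>) (G\<lparr>carrier := H1'\<rparr>)"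
    and "\<phi>2 \<in> iso (G\<lparr>carrier := H2\<rparr>) (G\<lparr>carrier := H2'\<rparr>)"
    and "H2 \<lhd> G"
    and "\<forall>x \<in> H1 \<inter> H2. \<phi>1 x = \<phi>2 x"
  shows "\<exists>\<phi>. \<phi> \<in> iso (G\<lparr>carrier := H1 <#>\<^bsub>G\<^esub> H2\<rparr>) (G\<lparr>carrier := H1' <#>\<^bsub>G\<^esub> H2'\<rparr>)
            \<and> (\<forall>x \<in> H1. \<phi> x = \<phi>1 x) \<and> (\<forall>x \<in> H2. \<phi> x = \<phi>2 x)"
proof -
  have sH1: "subgroup H1 G" and fin1: "finite (rcosets H1)"
    using assms(3) unfolding finite_index_subgroup_def by auto
  have sH2: "subgroup H2 G" and fin2: "finite (rcosets H2)"
    using assms(5) unfolding finite_index_subgroup_def by auto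
  have sH1': "subgroup H1' G" using assms(4) unfolding finite_index_subgroup_def by auto
  have sH2': "subgroup H2' G" using assms(6) unfolding finite_index_subgroup_def by auto
  have ur: "\<And>x y n. x \<in> carrier G \<Longrightarrow> y \<in> carrier G \<Longrightarrow> (n::nat) > 0 \<Longrightarrow> x [^] n = y [^] n \<Longrightarrow> x = y"
    using assms(2) unfolding unique_root_property_def by blast
  have c1: "\<forall>x\<in>H1. \<phi>1 x \<in> H1'" and m1: "\<forall>x\<in>H1. \<forall>y\<in>H1. \<phi>1 (x \<otimes> y) = \<phi>1 x \<otimes> \<phi>1 y"
    and b1: "bij_betw \<phi>1 H1 H1'"
    using assms(7) unfolding iso_def hom_def by (auto simp: Pi_def)
  have c2: "\<forall>x\<in>H2. \<phi>2 x \<in> H2'" and m2: "\<forall>x\<in>H2. \<forall>y\<in>H2. \<phi>2 (x \<otimes> y) = \<phi>2 x \<otimes> \<phi>2 y"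
    and b2: "bij_betw \<phi>2 H2 H2'"
    using assms(8) unfolding iso_def hom_def by (auto simp: Pi_def)
  have cc1: "\<forall>x\<in>H1. \<phi>1 x \<in> carrier G" using c1 subgroup.mem_carrier[OF sH1'] by blast
  have cc2: "\<forall>x\<in>H2. \<phi>2 x \<in> carrier G" using c2 subgroup.mem_carrier[OF sH2'] by blast
  have H1c: "\<And>x. x \<in> H1 \<Longrightarrow> x \<in> carrier G" using subgroup.mem_carrier[OF sH1] by blast
  have H2c: "\<And>x. x \<in> H2 \<Longrightarrow> x \<in> carrier G" using subgroup.mem_carrier[OF sH2] by blast
  have agree: "\<And>x. x \<in> H1 \<Longrightarrow> x \<in> H2 \<Longrightarrow> \<phi>1 x = \<phi>2 x" using assms(10) by blast

  have L1: "\<phi>2 (inv k \<otimes> h \<otimes> k) = inv (\<phi>1 k) \<otimes> \<phi>2 h \<otimes> \<phi>1 k" if k: "k \<in> H1" and h: "h \<in> H2" for k h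
  proof -
    have kc: "k \<in> carrier G" using H1c k .
    have hc: "h \<in> carrier G" using H2c h .
    obtain m :: nat where m: "m > 0" "h [^] m \<in> H1" using fi_pow[OF sH1 fin1 hc] by blast
    have hm2: "h [^] m \<in> H2" using sub_pow_closed[OF sH2 h] .
    have ik: "inv k \<in> H1" using subgroup.m_inv_closed[OF sH1 k] .
    have x2: "inv k \<otimes> h \<otimes> k \<in> H2" using normal.inv_op_closed1[OF assms(9) kc h] .
    have cH2: "inv k \<otimes> h [^] m \<otimes> k \<in> H2" using normal.inv_op_closed1[OF assms(9) kc hm2] .
    have ikh: "inv k \<otimes> h [^] m \<in> H1" using subgroup.m_closed[OF sH1 ik m(2)] .
    have cH1: "inv k \<otimes> h [^] m \<otimes> k \<in> H1" using subgroup.m_closed[OF sH1 ikh k] .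
    have a: "\<phi>1 k \<in> carrier G" using cc1 k by blast
    have p2h: "\<phi>2 h \<in> carrier G" using cc2 h by blast
    have "\<phi>2 (inv k \<otimes> h \<otimes> k) [^] m = \<phi>2 ((inv k \<otimes> h \<otimes> k) [^] m)"
      using subhom_pow[OF cc2 m2 sH2 x2] by simp
    also have "\<dots> = \<phi>2 (inv k \<otimes> h [^] m \<otimes> k)" using conj_pow[OF kc hc] by simp
    also have "\<dots> = \<phi>1 (inv k \<otimes> h [^] m \<otimes> k)" using agree[OF cH1 cH2] by simp
    also have "\<dots> = \<phi>1 (inv k) \<otimes> \<phi>1 (h [^] m) \<otimes> \<phi>1 k" using m1 ikh k ik m(2) by simp
    also have "\<dots> = inv (\<phi>1 k) \<otimes> \<phi>2 (h [^] m) \<otimes> \<phi>1 k"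
      using subhom_inv[OF cc1 m1 sH1 k] agree[OF m(2) hm2] by simp
    also have "\<dots> = inv (\<phi>1 k) \<otimes> \<phi>2 h [^] m \<otimes> \<phi>1 k" using subhom_pow[OF cc2 m2 sH2 h] by simp
    also have "\<dots> = (inv (\<phi>1 k) \<otimes> \<phi>2 h \<otimes> \<phi>1 k) [^] m" using conj_pow[OF a p2h] by simp
    finally have eq: "\<phi>2 (inv k \<otimes> h \<otimes> k) [^] m = (inv (\<phi>1 k) \<otimes> \<phi>2 h \<otimes> \<phi>1 k) [^] m" .
    show ?thesis by (rule ur[OF _ _ m(1) eq]) (use cc2 x2 a p2h in auto)
  qed

  have L4: "u = v" if u: "u \<in> H1" and v: "v \<in> H2" and e: "\<phi>1 u = \<phi>2 v" for u v
  proof -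
    have uc: "u \<in> carrier G" using H1c u .
    obtain m :: nat where m: "m > 0" "u [^] m \<in> H2" using fi_pow[OF sH2 fin2 uc] by blast
    have um1: "u [^] m \<in> H1" using sub_pow_closed[OF sH1 u] .
    have vm: "v [^] m \<in> H2" using sub_pow_closed[OF sH2 v] .
    have "\<phi>2 (u [^] m) = \<phi>1 (u [^] m)" using agree[OF um1 m(2)] by simp
    also have "\<dots> = \<phi>1 u [^] m" using subhom_pow[OF cc1 m1 sH1 u] .
    also have "\<dots> = \<phi>2 v [^] m" using e by simp
    also have "\<dots> = \<phi>2 (v [^] m)" using subhom_pow[OF cc2 m2 sH2 v] by simp
    finally have "u [^] m = v [^] m" using bij_betw_imp_inj_on[OF b2] m(2) vm unfolding inj_on_def by blast
    thus ?thesis by (rule ur[OF uc H2c[OF v] m(1)])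
  qed

  have L2: "\<phi>1 h1 \<otimes> \<phi>2 h2 = \<phi>1 k1 \<otimes> \<phi>2 k2"
    if h1: "h1 \<in> H1" and k1: "k1 \<in> H1" and h2: "h2 \<in> H2" and k2: "k2 \<in> H2"
      and e: "h1 \<otimes> h2 = k1 \<otimes> k2" for h1 h2 k1 k2
  proof -
    have e2: "inv k1 \<otimes> h1 = k2 \<otimes> inv h2" using e alg4[OF H1c[OF h1] H2c[OF h2] H1c[OF k1] H2c[OF k2]] by simp
    have a1: "inv k1 \<otimes> h1 \<in> H1" using subgroup.m_closed[OF sH1 subgroup.m_inv_closed[OF sH1 k1] h1] .
    have a2: "k2 \<otimes> inv h2 \<in> H2" using subgroup.m_closed[OF sH2 k2 subgroup.m_inv_closed[OF sH2 h2]] .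
    have "\<phi>1 (inv k1 \<otimes> h1) = \<phi>2 (k2 \<otimes> inv h2)" using agree[OF a1] a2 e2 by simp
    moreover have "\<phi>1 (inv k1 \<otimes> h1) = inv (\<phi>1 k1) \<otimes> \<phi>1 h1"
      using m1 subgroup.m_inv_closed[OF sH1 k1] h1 subhom_inv[OF cc1 m1 sH1 k1] by simp
    moreover have "\<phi>2 (k2 \<otimes> inv h2) = \<phi>2 k2 \<otimes> inv (\<phi>2 h2)"
      using m2 subgroup.m_inv_closed[OF sH2 h2] k2 subhom_inv[OF cc2 m2 sH2 h2] by simp
    ultimately show ?thesis
      using alg4[of "\<phi>1 h1" "\<phi>2 h2" "\<phi>1 k1" "\<phi>2 k2"] cc1 cc2 h1 h2 k1 k2 by simp
  qed

  define P where "P x = (SOME p. fst p \<in> H1 \<and> snd p \<in> H2 \<and> x = fst p \<otimes> snd p)" for x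
  define \<Phi> where "\<Phi> x = \<phi>1 (fst (P x)) \<otimes> \<phi>2 (snd (P x))" for x

  have L3: "\<Phi> (h1 \<otimes> h2) = \<phi>1 h1 \<otimes> \<phi>2 h2" if h1: "h1 \<in> H1" and h2: "h2 \<in> H2" for h1 h2
  proof -
    have "\<exists>p. fst p \<in> H1 \<and> snd p \<in> H2 \<and> h1 \<otimes> h2 = fst p \<otimes> snd p" using h1 h2 by auto
    hence "fst (P (h1 \<otimes> h2)) \<in> H1 \<and> snd (P (h1 \<otimes> h2)) \<in> H2 \<and> h1 \<otimes> h2 = fst (P (h1 \<otimes> h2)) \<otimes> snd (P (h1 \<otimes> h2))"
      unfolding P_def by (rule someI_ex)
    hence "\<phi>1 (fst (P (h1 \<otimes> h2))) \<otimes> \<phi>2 (snd (P (h1 \<otimes> h2))) = \<phi>1 h1 \<otimes> \<phi>2 h2"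
      using L2[OF _ h1 _ h2] by metis
    thus ?thesis unfolding \<Phi>_def .
  qed

  have memS: "\<And>z. z \<in> H1 <#> H2 \<Longrightarrow> \<exists>h1 h2. h1 \<in> H1 \<and> h2 \<in> H2 \<and> z = h1 \<otimes> h2"
    unfolding set_mult_def by blast

  have clos: "\<Phi> z \<in> H1' <#> H2'" if z: "z \<in> H1 <#> H2" for z
  proof -
    obtain h1 h2 where h: "h1 \<in> H1" "h2 \<in> H2" "z = h1 \<otimes> h2" using memS[OF z] by blast
    have "\<phi>1 h1 \<in> H1'" "\<phi>2 h2 \<in> H2'" using c1 c2 h by blast+
    thus ?thesis using L3[OF h(1,2)] h(3) unfolding set_mult_def by blast
  qed

  have mult: "\<Phi> (x \<otimes> y) = \<Phi> x \<otimes> \<Phi> y" if x: "x \<in> H1 <#> H2" and y: "y \<in> H1 <#> H2" for x y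
  proof -
    obtain h1 h2 where h: "h1 \<in> H1" "h2 \<in> H2" "x = h1 \<otimes> h2" using memS[OF x] by blast
    obtain k1 k2 where k: "k1 \<in> H1" "k2 \<in> H2" "y = k1 \<otimes> k2" using memS[OF y] by blast
    have hc: "h1 \<in> carrier G" "h2 \<in> carrier G" using H1c H2c h by auto
    have kc: "k1 \<in> carrier G" "k2 \<in> carrier G" using H1c H2c k by auto
    have j1: "h1 \<otimes> k1 \<in> H1" using subgroup.m_closed[OF sH1 h(1) k(1)] .
    have cj: "inv k1 \<otimes> h2 \<otimes> k1 \<in> H2" using normal.inv_op_closed1[OF assms(9) kc(1) h(2)] .
    have j2: "inv k1 \<otimes> h2 \<otimes> k1 \<otimes> k2 \<in> H2" using subgroup.m_closed[OF sH2 cj k(2)] .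
    have "x \<otimes> y = (h1 \<otimes> k1) \<otimes> (inv k1 \<otimes> h2 \<otimes> k1 \<otimes> k2)"
      using h(3) k(3) hc kc by (simp add: m_assoc kinvk)
    hence "\<Phi> (x \<otimes> y) = \<phi>1 (h1 \<otimes> k1) \<otimes> \<phi>2 (inv k1 \<otimes> h2 \<otimes> k1 \<otimes> k2)"
      using L3[OF j1 j2] by simp
    also have "\<dots> = \<phi>1 h1 \<otimes> \<phi>1 k1 \<otimes> (inv (\<phi>1 k1) \<otimes> \<phi>2 h2 \<otimes> \<phi>1 k1 \<otimes> \<phi>2 k2)"
      using m1 m2 h k cj L1[OF k(1) h(2)] by simp
    also have "\<dots> = \<phi>1 h1 \<otimes> \<phi>2 h2 \<otimes> (\<phi>1 k1 \<otimes> \<phi>2 k2)"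
    proof -
      have "\<phi>1 h1 \<in> carrier G" "\<phi>1 k1 \<in> carrier G" "\<phi>2 h2 \<in> carrier G" "\<phi>2 k2 \<in> carrier G"
        using cc1 cc2 h k by auto
      thus ?thesis by (simp add: m_assoc kinvk)
    qed
    also have "\<dots> = \<Phi> x \<otimes> \<Phi> y" using L3[OF h(1,2)] L3[OF k(1,2)] h(3) k(3) by simp
    finally show ?thesis .
  qed

  have inj: "inj_on \<Phi> (H1 <#> H2)"
  proof (rule inj_onI)
    fix x y assume x: "x \<in> H1 <#> H2" and y: "y \<in> H1 <#> H2" and e: "\<Phi> x = \<Phi> y"
    obtain h1 h2 where h: "h1 \<in> H1" "h2 \<in> H2" "x = h1 \<otimes> h2" using memS[OF x] by blast
    obtain k1 k2 where k: "k1 \<in> H1" "k2 \<in> H2" "y = k1 \<otimes> k2" using memS[OF y] by blast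
    have e1: "\<phi>1 h1 \<otimes> \<phi>2 h2 = \<phi>1 k1 \<otimes> \<phi>2 k2" using e L3[OF h(1,2)] L3[OF k(1,2)] h(3) k(3) by simp
    have e2: "inv (\<phi>1 k1) \<otimes> \<phi>1 h1 = \<phi>2 k2 \<otimes> inv (\<phi>2 h2)"
      using e1 alg4[of "\<phi>1 h1" "\<phi>2 h2" "\<phi>1 k1" "\<phi>2 k2"] cc1 cc2 h k by simp
    have a1: "inv k1 \<otimes> h1 \<in> H1" using subgroup.m_closed[OF sH1 subgroup.m_inv_closed[OF sH1 k(1)] h(1)] .
    have a2: "k2 \<otimes> inv h2 \<in> H2" using subgroup.m_closed[OF sH2 k(2) subgroup.m_inv_closed[OF sH2 h(2)]] .
    have "\<phi>1 (inv k1 \<otimes> h1) = inv (\<phi>1 k1) \<otimes> \<phi>1 h1"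
      using m1 subgroup.m_inv_closed[OF sH1 k(1)] h(1) subhom_inv[OF cc1 m1 sH1 k(1)] by simp
    moreover have "\<phi>2 (k2 \<otimes> inv h2) = \<phi>2 k2 \<otimes> inv (\<phi>2 h2)"
      using m2 subgroup.m_inv_closed[OF sH2 h(2)] k(2) subhom_inv[OF cc2 m2 sH2 h(2)] by simp
    ultimately have "\<phi>1 (inv k1 \<otimes> h1) = \<phi>2 (k2 \<otimes> inv h2)" using e2 by simp
    hence "inv k1 \<otimes> h1 = k2 \<otimes> inv h2" using L4[OF a1 a2] by simp
    thus "x = y" using alg4[OF H1c[OF h(1)] H2c[OF h(2)] H1c[OF k(1)] H2c[OF k(2)]] h(3) k(3) by simp
  qed

  have surj: "\<Phi> ` (H1 <#> H2) = H1' <#> H2'"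
  proof
    show "\<Phi> ` (H1 <#> H2) \<subseteq> H1' <#> H2'" using clos by blast
  next
    show "H1' <#> H2' \<subseteq> \<Phi> ` (H1 <#> H2)"
    proof
      fix z assume "z \<in> H1' <#> H2'"
      then obtain a b where ab: "a \<in> H1'" "b \<in> H2'" "z = a \<otimes> b" unfolding set_mult_def by blast
      obtain h1 where h1: "h1 \<in> H1" "a = \<phi>1 h1" using ab(1) bij_betw_imp_surj_on[OF b1] by blast
      obtain h2 where h2: "h2 \<in> H2" "b = \<phi>2 h2" using ab(2) bij_betw_imp_surj_on[OF b2] by blast
      have "h1 \<otimes> h2 \<in> H1 <#> H2" using h1 h2 unfolding set_mult_def by blast
      moreover have "z = \<Phi> (h1 \<otimes> h2)" using L3[OF h1(1) h2(1)] ab(3) h1(2) h2(2) by simp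
      ultimately show "z \<in> \<Phi> ` (H1 <#> H2)" by blast
    qed
  qed

  have iso: "\<Phi> \<in> iso (G\<lparr>carrier := H1 <#> H2\<rparr>) (G\<lparr>carrier := H1' <#> H2'\<rparr>)"
    unfolding iso_def hom_def bij_betw_def using clos mult inj surj by (auto simp: Pi_def)
  have r1: "\<forall>x \<in> H1. \<Phi> x = \<phi>1 x"
  proof
    fix x assume x: "x \<in> H1"
    have "\<Phi> (x \<otimes> \<one>) = \<phi>1 x \<otimes> \<phi>2 \<one>" using L3[OF x subgroup.one_closed[OF sH2]] .
    thus "\<Phi> x = \<phi>1 x" using subhom_one[OF cc2 m2 sH2] H1c[OF x] cc1 x by simp
  qed
  have r2: "\<forall>x \<in> H2. \<Phi> x = \<phi>2 x"
  proof
    fix x assume x: "x \<in> H2"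
    have "\<Phi> (\<one> \<otimes> x) = \<phi>1 \<one> \<otimes> \<phi>2 x" using L3[OF subgroup.one_closed[OF sH1] x] .
    thus "\<Phi> x = \<phi>2 x" using subhom_one[OF cc1 m1 sH1] H2c[OF x] cc2 x by simp
  qed
  show ?thesis using iso r1 r2 by blast
qed

theorem lemma2p6:
  fixes G :: "('a, 'b) monoid_scheme"
    and H1 H1' H2 H2' :: "'a set"
    and \<phi>1 \<phi>2 :: "'a \<Rightarrow> 'a"
  assumes "group G"
    and "unique_root_property G"
    and "finite_index_subgroup H1 G" and "finite_index_subgroup H1' G"
    and "finite_index_subgroup H2 G" and "finite_index_subgroup H2' G"
    and "\<phi>1 \<in> iso (G\<lparr>carrier := H1\<rparr>) (G\<lparr>carrier := H1'\<rparr>)"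
    and "\<phi>2 \<in> iso (G\<lparr>carrier := H2\<rparr>) (G\<lparr>carrier := H2'\<rparr>)"
    and "H2 \<lhd> G"
    and "\<forall>x \<in> H1 \<inter> H2. \<phi>1 x = \<phi>2 x"
  shows "\<exists>\<phi>. \<phi> \<in> iso (G\<lparr>carrier := H1 <#>\<^bsub>G\<^esub> H2\<rparr>) (G\<lparr>carrier := H1' <#>\<^bsub>G\<^esub> H2'\<rparr>)
            \<and> (\<forall>x \<in> H1. \<phi> x = \<phi>1 x) \<and> (\<forall>x \<in> H2. \<phi> x = \<phi>2 x)"
  using group.main[OF assms(1) assms] .

end
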